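(* Let $q$ be a prime power. Then: (i) $\ell_q(u,n)=u+q$ for all integers $n\ge1$ and $1\le u\le\min\{n,q\}$; (ii) $\ell_q(sq)=sq+q$ for $1\le s\le q$; (iii) $\ell_q(q+1,n)=2(q+1)$ for all $n\ge2$; (iv) if $q$ is even, $\ell_q(q+2,n)=2(q+1)$ for all $n\ge 2$; (v) $\ell_q(q^2-2q+1)=q^2-1$; (vi) $\ell_q(u)=q^2$ for $q^2-2q+2\le u\le q^2-q$; (vii) $\ell_q(u)=q^2+q$ for $q^2-q+1\le u\le q^2$.
   Context: In the affine plane $\mathrm{AG}(2,q)$, a transversal is a set $\mathcal{T}=\{L_1,\dots,L_{q+1}\}$ of $q+1$ pairwise non-parallel lines (one from each parallel class). For a set $\mathcal{F}$ of points of $\mathrm{AG}(2,q)$ put $\mathcal{F}(\mathcal{T})=\sum_{i=1}^{q+1}|\mathcal{F}\cap L_i|$. A projective $(u,n)$-arc in $\mathrm{AG}(2,q)$ is a set of $u$ points meeting every line in at most $n$ points. For integers $u,n\ge0$ such that a projective $(u,n)$-arc in $\mathrm{AG}(2,q)$ exists, $\ell_q(u,n)$ is the minimum, over all projective $(u,n)$-arcs $\mathcal{F}$ in $\mathrm{AG}(2,q)$, of $\max\{\mathcal{F}(\mathcal{T}):\mathcal{T}\text{ a transversal of }\mathrm{AG}(2,q)\}$. For $0\le u\le q^2$, $\ell_q(u)=\ell_q(u,q)$ (the same minimum over all sets of $u$ points). In parts (i),(iii),(iv) the value $u$ is assumed to be such that a projective $(u,n)$-arc in $\mathrm{AG}(2,q)$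 exists. *)

theory Defs
  imports Main
begin

definition ag_line :: "('a::{field,finite} \<times> 'a) set \<Rightarrow> bool" where
  "ag_line L \<longleftrightarrow> (\<exists>a b c. (a, b) \<noteq> (0, 0) \<and> L = {(x, y). a * x + b * y = c})"

definition ag_parallel :: "('a::{field,finite} \<times> 'a) set \<Rightarrow> ('a \<times> 'a) set \<Rightarrow> bool" where
  "ag_parallel L M \<longleftrightarrow> L = M \<or> L \<inter> M = {}"

definition transversal :: "('a::{field,finite} \<times> 'a) set set \<Rightarrow> bool" where
  "transversal T \<longleftrightarrow> (\<forall>L\<in>T. ag_line L) \<and> card T = card (UNIV :: 'a set) + 1 \<and>
     (\<forall>L\<in>T. \<forall>M\<in>T. L \<noteq> M \<longrightarrow> \<not> ag_parallel L M)"

definition Fval :: "('a::{field,finite} \<times> 'a) set \<Rightarrow> ('a \<times> 'a) set set \<Rightarrow> nat" where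
  "Fval F T = (\<Sum>L\<in>T. card (F \<inter> L))"

definition proj_arc :: "nat \<Rightarrow> nat \<Rightarrow> ('a::{field,finite} \<times> 'a) set \<Rightarrow> bool" where
  "proj_arc u n F \<longleftrightarrow> card F = u \<and> (\<forall>L. ag_line L \<longrightarrow> card (F \<inter> L) \<le> n)"

definition ell :: "'a::{field,finite} itself \<Rightarrow> nat \<Rightarrow> nat \<Rightarrow> nat" where
  "ell _ u n = Min {Max {Fval F T | T. transversal (T :: ('a \<times> 'a) set set)}
                   | F :: ('a \<times> 'a) set. proj_arc u n F}"

definition ell1 :: "('a::{field,finite}) itself \<Rightarrow> nat \<Rightarrow> nat" where
  "ell1 t u = ell t u (card (UNIV :: 'a set))"

end

theory Submission
  imports Defs "HOL-Computational_Algebra.Polynomial" "HOL-Library.Cardinality"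
begin



definition key :: "'a::{field,finite} option \<Rightarrow> 'a \<times> 'a \<Rightarrow> 'a" where
  "key c p = (case c of None \<Rightarrow> fst p | Some m \<Rightarrow> snd p - m * fst p)"

definition line_of :: "'a::{field,finite} option \<Rightarrow> 'a \<Rightarrow> ('a \<times> 'a) set" where
  "line_of c b = {p. key c p = b}"

lemma q_ge2: "2 \<le> CARD('a::{field,finite})"
proof -
  have "{0::'a, 1} \<subseteq> UNIV" by simp
  hence "card {0::'a,1} \<le> CARD('a)" by (intro card_mono) auto
  thus ?thesis by simp
qed

lemma ag_line_line_of: "ag_line (line_of c (b::'a::{field,finite}))"
proof (cases c)
  case None
  show ?thesis unfolding ag_line_def
    by (rule exI[of _ 1], rule exI[of _ 0], rule exI[of _ b]) (auto simp: None line_of_def key_def)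
next
  case (Some m)
  show ?thesis unfolding ag_line_def
    by (rule exI[of _ "-m"], rule exI[of _ 1], rule exI[of _ b]) (auto simp: Some line_of_def key_def algebra_simps)
qed

lemma ag_line_cases:
  assumes "ag_line (L::('a::{field,finite} \<times> 'a) set)"
  shows "\<exists>c b. L = line_of c b"
proof -
  obtain a b e where ab: "(a,b) \<noteq> (0,0)" and L: "L = {(x, y). a * x + b * y = e}"
    using assms unfolding ag_line_def by blast
  show ?thesis
  proof (cases "b = 0")
    case True
    with ab have a: "a \<noteq> 0" by auto
    have "L = line_of None (e/a)"
      unfolding L line_of_def key_def using a True by (auto simp: field_simps)
    thus ?thesis by blast
  next
    case False
    have "L = line_of (Some (-a/b)) (e/b)"
      unfolding L line_of_def key_def using False by (auto simp: field_simps)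
    thus ?thesis by blast
  qed
qed

lemma ag_line_iff: "ag_line L \<longleftrightarrow> (\<exists>c b. L = line_of c b)"
  using ag_line_cases ag_line_line_of by blast

lemma two_pts:
  fixes p p' :: "'a::{field,finite} \<times> 'a"
  assumes "p \<noteq> p'" "p \<in> line_of c b" "p' \<in> line_of c b" "p \<in> line_of c' b'" "p' \<in> line_of c' b'"
  shows "c = c' \<and> b = b'"
proof -
  obtain x y x' y' where p: "p = (x,y)" and p': "p' = (x',y')" by (cases p, cases p')
  show ?thesis
  proof (cases c)
    case None
    show ?thesis
    proof (cases c')
      case None
      with \<open>c = None\<close> assms show ?thesis by (auto simp: line_of_def key_def)
    next
      case (Some m')
      with \<open>c = None\<close> assms p p' show ?thesis by (auto simp: line_of_def key_def)
    qed
  next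
    case (Some m)
    show ?thesis
    proof (cases c')
      case None
      with \<open>c = Some m\<close> assms p p' show ?thesis by (auto simp: line_of_def key_def)
    next
      case (Some m')
      from assms p p' \<open>c = Some m\<close> Some have
        e: "y - m*x = b" "y' - m*x' = b" "y - m'*x = b'" "y' - m'*x' = b'"
        by (auto simp: line_of_def key_def)
      have "x \<noteq> x'"
      proof
        assume "x = x'" with e have "y = y'" by auto
        with \<open>x = x'\<close> assms p p' show False by auto
      qed
      have "(m - m') * (x - x') = (y - m'*x) - (y' - m'*x') - ((y - m*x) - (y' - m*x'))" by (simp add: algebra_simps)
      also have "\<dots> = 0" using e by simp
      finally have "(m - m') * (x - x') = 0" .
      hence "m = m'" using \<open>x \<noteq> x'\<close> by auto
      with e Some \<open>c = Some m\<close> show ?thesis by auto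
    qed
  qed
qed

lemma line_two_pts: "\<exists>p p'. p \<noteq> p' \<and> p \<in> line_of c b \<and> p' \<in> line_of c (b::'a::{field,finite})"
proof (cases c)
  case None
  show ?thesis by (rule exI[of _ "(b,0)"], rule exI[of _ "(b,1)"]) (auto simp: None line_of_def key_def)
next
  case (Some m)
  show ?thesis by (rule exI[of _ "(0,b)"], rule exI[of _ "(1,m+b)"]) (auto simp: Some line_of_def key_def)
qed

lemma line_of_inj: "line_of c b = line_of c' (b'::'a::{field,finite}) \<Longrightarrow> c = c' \<and> b = b'"
  using line_two_pts[of c b] two_pts by metis

lemma line_of_meet: assumes cc: "c \<noteq> c'" shows "line_of c b \<inter> line_of c' (b'::'a::{field,finite}) \<noteq> {}"
proof (cases c)
  case None
  then obtain m' where c': "c' = Some m'" using cc by (cases c') auto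
  have "(b, m'*b + b') \<in> line_of c b \<inter> line_of c' b'" by (auto simp: None c' line_of_def key_def)
  thus ?thesis by blast
next
  case (Some m)
  show ?thesis
  proof (cases c')
    case None
    have "(b', m*b' + b) \<in> line_of c b \<inter> line_of c' b'" by (auto simp: None Some line_of_def key_def)
    thus ?thesis by blast
  next
    case (Some m')
    with \<open>c = Some m\<close> cc have "m - m' \<noteq> 0" by auto
    define x where "x = (b' - b) / (m - m')"
    have "(x, m*x + b) \<in> line_of c b \<inter> line_of c' b'"
      using \<open>m - m' \<noteq> 0\<close> by (auto simp: \<open>c = Some m\<close> Some line_of_def key_def x_def field_simps)
    thus ?thesis by blast
  qed
qed

lemma card_line: "card (line_of c (b::'a::{field,finite})) = CARD('a)"
proof (cases c)
  case None
  have "line_of c b = (\<lambda>y. (b,y)) ` UNIV" by (auto simp: None line_of_def key_def)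
  moreover have "inj (\<lambda>y::'a. (b,y))" by (auto intro: injI)
  ultimately show ?thesis by (simp add: card_image)
next
  case (Some m)
  have "line_of c b = (\<lambda>x. (x, m*x+b)) ` UNIV" by (auto simp: Some line_of_def key_def algebra_simps)
  moreover have "inj (\<lambda>x::'a. (x,m*x+b))" by (auto intro: injI)
  ultimately show ?thesis by (simp add: card_image)
qed

lemma class_sum: "(\<Sum>b\<in>UNIV. card (A \<inter> line_of c b)) = card (A::('a::{field,finite}\<times>'a) set)"
proof -
  have "(\<Sum>b\<in>UNIV. sum (\<lambda>_. 1::nat) {x. x \<in> A \<and> key c x = b}) = sum (\<lambda>_. 1) A"
    by (rule sum.group) auto
  moreover have "\<And>b. {x. x \<in> A \<and> key c x = b} = A \<inter> line_of c b" by (auto simp: line_of_def)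
  ultimately show ?thesis by simp
qed




lemma card_opt: "CARD('a::{field,finite} option) = CARD('a) + 1"
  by (simp add: card_UNIV_option)

lemma transversal_choice:
  fixes g :: "'a::{field,finite} option \<Rightarrow> 'a"
  shows "transversal (range (\<lambda>c. line_of c (g c)))"
    and "Fval F (range (\<lambda>c. line_of c (g c))) = (\<Sum>c\<in>UNIV. card (F \<inter> line_of c (g c)))"
proof -
  have inj: "inj (\<lambda>c. line_of c (g c))"
    by (rule injI) (use line_of_inj in blast)
  show "transversal (range (\<lambda>c. line_of c (g c)))"
    unfolding transversal_def
  proof (intro conjI ballI impI)
    fix L assume "L \<in> range (\<lambda>c. line_of c (g c))"
    thus "ag_line L" using ag_line_line_of by auto
  next
    show "card (range (\<lambda>c. line_of c (g c))) = CARD('a) + 1"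
      using card_image[OF inj_on_subset[OF inj subset_UNIV]] card_opt by simp
  next
    fix L M assume L: "L \<in> range (\<lambda>c. line_of c (g c))" and M: "M \<in> range (\<lambda>c. line_of c (g c))"
      and LM: "L \<noteq> M"
    then obtain c c' where "L = line_of c (g c)" "M = line_of c' (g c')" "c \<noteq> c'" by auto
    thus "\<not> ag_parallel L M" using LM line_of_meet[of c c'] unfolding ag_parallel_def by auto
  qed
  show "Fval F (range (\<lambda>c. line_of c (g c))) = (\<Sum>c\<in>UNIV. card (F \<inter> line_of c (g c)))"
    unfolding Fval_def by (subst sum.reindex[OF inj_on_subset[OF inj subset_UNIV]]) simp
qed

lemma lower_gen:
  fixes F :: "('a::{field,finite} \<times> 'a) set"
  assumes "\<forall>c. \<exists>b. v c \<le> card (F \<inter> line_of c b)"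
  shows "\<exists>T. transversal T \<and> (\<Sum>c\<in>UNIV. v c) \<le> Fval F T"
proof -
  from assms obtain g where g: "\<And>c. v c \<le> card (F \<inter> line_of c (g c))" by metis
  show ?thesis
    by (rule exI[of _ "range (\<lambda>c. line_of c (g c))"])
       (simp add: transversal_choice sum_mono g)
qed

lemma upper_gen:
  fixes F :: "('a::{field,finite} \<times> 'a) set"
  assumes bnd: "\<And>c b. card (F \<inter> line_of c b) \<le> A + (if c = None then B else 0)"
    and T: "transversal T"
  shows "Fval F T \<le> (CARD('a) + 1) * A + B"
proof -
  define vert where "vert L \<longleftrightarrow> (\<exists>b. L = line_of (None::'a option) b)" for L
  have cT: "card T = CARD('a) + 1" and lT: "\<And>L. L \<in> T \<Longrightarrow> ag_line L"
    and np: "\<And>L M. L \<in> T \<Longrightarrow> M \<in> T \<Longrightarrow> L \<noteq> M \<Longrightarrow> \<not> ag_parallel L M"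
    using T unfolding transversal_def by auto
  have fT: "finite T" by simp
  have each: "card (F \<inter> L) \<le> A + (if vert L then B else 0)" if LT: "L \<in> T" for L
  proof -
    obtain c b where L: "L = line_of c b" using ag_line_cases lT[OF LT] by blast
    have "c = None \<Longrightarrow> vert L" unfolding vert_def L by auto
    thus ?thesis using bnd[of c b] L by (cases "c = None") auto
  qed
  have v1: "card {L\<in>T. vert L} \<le> 1"
  proof -
    have "\<forall>L\<in>{L\<in>T. vert L}. \<forall>M\<in>{L\<in>T. vert L}. L = M"
    proof (intro ballI, rule ccontr)
      fix L M assume L: "L \<in> {L\<in>T. vert L}" and M: "M \<in> {L\<in>T. vert L}" and "L \<noteq> M"
      then obtain b b' where "L = line_of None b" "M = line_of None b'" unfolding vert_def by auto
      hence "L \<inter> M = {}" using \<open>L \<noteq> M\<close> by (auto simp: line_of_def key_def)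
      thus False using np[of L M] L M \<open>L \<noteq> M\<close> unfolding ag_parallel_def by auto
    qed
    thus ?thesis using card_le_Suc0_iff_eq[of "{L\<in>T. vert L}"] by simp
  qed
  have "Fval F T \<le> (\<Sum>L\<in>T. A + (if vert L then B else 0))"
    unfolding Fval_def by (rule sum_mono) (rule each)
  also have "\<dots> = card T * A + B * card {L\<in>T. vert L}"
    by (simp add: sum.distrib sum.If_cases mult.commute Int_def)
  also have "\<dots> \<le> (CARD('a) + 1) * A + B"
    using v1 cT by simp
  finally show ?thesis .
qed

lemma star:
  fixes F :: "('a::{field,finite} \<times> 'a) set"
  assumes "p \<in> F"
  shows "card F + CARD('a) \<le> (\<Sum>c\<in>UNIV. card (F \<inter> line_of c (key c p)))"
proof -
  have fin: "finite F" by simp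
  have "(\<Sum>c\<in>UNIV. card (F \<inter> line_of c (key c p)))
        = (\<Sum>c\<in>UNIV. \<Sum>f\<in>F. if key c f = key c p then 1 else 0)"
    by (intro sum.cong refl) (simp add: line_of_def Int_def sum.If_cases)
  also have "\<dots> = (\<Sum>f\<in>F. \<Sum>c\<in>UNIV. if key c f = key c p then 1 else 0)"
    by (rule sum.swap)
  finally have eq: "(\<Sum>c\<in>UNIV. card (F \<inter> line_of c (key c p))) = (\<Sum>f\<in>F. card {c. key c f = key c p})"
    by (simp add: sum.If_cases)
  have h1: "1 \<le> card {c. key c f = key c p}" for f
  proof -
    obtain x y x0 y0 where f: "f = (x,y)" and p: "p = (x0,y0)" by (cases f, cases p)
    have "\<exists>c. key c f = key c p"
    proof (cases "x = x0")
      case True thus ?thesis by (intro exI[of _ None]) (simp add: key_def f p)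
    next
      case False
      hence "key (Some ((y - y0)/(x - x0))) f = key (Some ((y - y0)/(x - x0))) p"
        by (simp add: key_def f p field_simps)
      thus ?thesis by blast
    qed
    then obtain c where "c \<in> {c. key c f = key c p}" by auto
    thus ?thesis using card_gt_0_iff[of "{c. key c f = key c p}"] by auto
  qed
  have s1: "(\<Sum>f\<in>F. card {c. key c f = key c p}) = card {c. key c p = key c p} + (\<Sum>f\<in>F-{p}. card {c. key c f = key c p})"
    using assms by (simp add: sum.remove)
  have s2: "card {c. key c p = key c p} = CARD('a) + 1" using card_opt by simp
  have "(\<Sum>f\<in>F-{p}. card {c. key c f = key c p}) \<ge> (\<Sum>f\<in>F-{p}. 1)"
    by (rule sum_mono) (rule h1)
  hence s3: "(\<Sum>f\<in>F-{p}. card {c. key c f = key c p}) \<ge> card F - 1" using assms by simp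
  have s4: "card F \<ge> 1" using assms card_gt_0_iff[of F] by auto
  show ?thesis unfolding eq s1 s2 using s3 s4 by linarith
qed

lemma ell_eqI:
  fixes t :: "'a::{field,finite} itself"
  assumes low: "\<And>F::('a\<times>'a) set. proj_arc u n F \<Longrightarrow> \<exists>T. transversal T \<and> v \<le> Fval F T"
    and arc0: "proj_arc u n (F0::('a\<times>'a) set)"
    and up: "\<And>T. transversal T \<Longrightarrow> Fval F0 T \<le> v"
  shows "ell t u n = v"
proof -
  define M where "M F = Max {Fval F T | T. transversal (T :: ('a \<times> 'a) set set)}" for F :: "('a\<times>'a) set"
  have fin: "finite {Fval F T | T. transversal (T :: ('a \<times> 'a) set set)}" for F :: "('a\<times>'a) set"
    by (intro finite_image_set) (rule finite)
  have ge: "v \<le> M F" if aF: "proj_arc u n F" for F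
  proof -
    obtain T where T: "transversal T" "v \<le> Fval F T" using low[OF aF] by blast
    have "Fval F T \<in> {Fval F T | T. transversal (T :: ('a \<times> 'a) set set)}" using T(1) by blast
    hence "Fval F T \<le> M F" unfolding M_def by (rule Max_ge[OF fin])
    thus ?thesis using T(2) by linarith
  qed
  have eq0: "M F0 = v"
  proof -
    obtain T where T: "transversal T" "v \<le> Fval F0 T" using low[OF arc0] by blast
    have ne: "{Fval F0 T | T. transversal (T :: ('a \<times> 'a) set set)} \<noteq> {}" using T by blast
    have "\<forall>x \<in> {Fval F0 T | T. transversal (T :: ('a \<times> 'a) set set)}. x \<le> v" using up by blast
    hence "M F0 \<le> v" unfolding M_def using Max_le_iff[OF fin ne] by blast
    thus ?thesis using ge[OF arc0] by simp
  qed
  have "ell t u n = Min {M F | F. proj_arc u n F}" unfolding ell_def M_def by (rule refl)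
  also have "\<dots> = v"
  proof (rule Min_eqI)
    show "finite {M F | F. proj_arc u n F}" by (intro finite_image_set) (rule finite)
    fix y assume "y \<in> {M F | F. proj_arc u n F}"
    then obtain F where "y = M F" "proj_arc u n F" by blast
    thus "v \<le> y" using ge by simp
  next
    have "M F0 \<in> {M F | F. proj_arc u n F}" using arc0 by blast
    thus "v \<in> {M F | F. proj_arc u n F}" using eq0 by simp
  qed
  finally show ?thesis .
qed




lemma of_nat_card_zero: "of_nat CARD('a) = (0::'a::{field,finite})"
proof -
  have b: "bij_betw (\<lambda>x::'a. x + 1) UNIV UNIV"
    by (rule bij_betw_byWitness[of _ "\<lambda>x. x - 1"]) auto
  have "(\<Sum>x\<in>UNIV. (x::'a) + 1) = (\<Sum>x\<in>UNIV. x)"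
    using sum.reindex_bij_betw[OF b, of "\<lambda>x. x"] by simp
  moreover have "(\<Sum>x\<in>UNIV. (x::'a) + 1) = (\<Sum>x\<in>UNIV. x) + of_nat CARD('a)"
    by (simp add: sum.distrib)
  ultimately show ?thesis by simp
qed

lemma psum:
  assumes "i < CARD('a) - 1"
  shows "(\<Sum>x\<in>UNIV. x^i) = (0::'a::{field,finite})"
proof (cases "i = 0")
  case True thus ?thesis using of_nat_card_zero by simp
next
  case False
  define p where "p = monom (1::'a) i - 1"
  have pv: "poly p x = x^i - 1" for x by (simp add: p_def poly_monom)
  have "coeff p i = 1" using False by (simp add: p_def coeff_monom)
  hence p0: "p \<noteq> 0" by auto
  have "degree p \<le> i" unfolding p_def
    by (metis degree_diff_le degree_monom_le degree_1 le0)
  hence roots: "card {x. x^i = (1::'a)} \<le> i"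
    using card_poly_roots_bound[OF p0] pv by simp
  have "\<exists>a::'a. a \<noteq> 0 \<and> a^i \<noteq> 1"
  proof (rule ccontr)
    assume "\<not> ?thesis"
    hence "UNIV - {0::'a} \<subseteq> {x. x^i = 1}" by auto
    hence "card (UNIV - {0::'a}) \<le> card {x. x^i = (1::'a)}" by (intro card_mono) auto
    moreover have "card (UNIV - {0::'a}) = CARD('a) - 1" by (simp add: card_Diff_singleton)
    ultimately show False using roots assms by linarith
  qed
  then obtain a :: 'a where a: "a \<noteq> 0" "a^i \<noteq> 1" by blast
  have b: "bij_betw (\<lambda>x::'a. a * x) UNIV UNIV"
    by (rule bij_betw_byWitness[of _ "\<lambda>x. x / a"]) (use a in auto)
  have "(\<Sum>x\<in>UNIV. (a*x)^i) = (\<Sum>x\<in>UNIV. x^i)"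
    using sum.reindex_bij_betw[OF b, of "\<lambda>x. x^i"] by simp
  moreover have "(\<Sum>x\<in>UNIV. (a*x)^i) = a^i * (\<Sum>x\<in>UNIV. x^i)"
    by (simp add: power_mult_distrib sum_distrib_left)
  ultimately have "(a^i - 1) * (\<Sum>x\<in>UNIV. x^i) = 0" by (simp add: algebra_simps)
  thus ?thesis using a by simp
qed

definition good :: "nat \<Rightarrow> ('a::{field,finite} \<times> 'a \<Rightarrow> 'a) \<Rightarrow> bool" where
  "good d f \<longleftrightarrow> (\<forall>i j. i + j + d < 2*(CARD('a)-1) \<longrightarrow> (\<Sum>p\<in>UNIV. fst p^i * snd p^j * f p) = 0)"

lemma mono_sum: "(\<Sum>p\<in>UNIV. fst p^i * snd p^j * k) = k * ((\<Sum>x\<in>UNIV. x^i) * (\<Sum>y\<in>UNIV. y^j))"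
  for k :: "'a::{field,finite}"
proof -
  have "(\<Sum>p\<in>UNIV. fst p^i * snd p^j * k) = (\<Sum>p\<in>(UNIV::'a set) \<times> (UNIV::'a set). fst p^i * snd p^j * k)"
    by simp
  also have "\<dots> = (\<Sum>x\<in>UNIV. \<Sum>y\<in>UNIV. x^i * y^j * k)"
  proof -
    have "(\<Sum>x\<in>UNIV. \<Sum>y\<in>UNIV. x^i * y^j * k) = (\<Sum>(x,y)\<in>(UNIV::'a set) \<times> (UNIV::'a set). x^i * y^j * k)"
      by (rule sum.cartesian_product)
    also have "(\<lambda>(x,y). x^i * y^j * k) = (\<lambda>p. fst p^i * snd p^j * k)" by auto
    finally show ?thesis by simp
  qed
  also have "\<dots> = (\<Sum>x\<in>UNIV. \<Sum>y\<in>UNIV. k * (x^i * y^j))"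
    by (simp add: mult.commute mult.left_commute)
  also have "\<dots> = k * (\<Sum>x\<in>UNIV. \<Sum>y\<in>UNIV. x^i * y^j)"
    by (simp add: sum_distrib_left)
  also have "\<dots> = k * ((\<Sum>x\<in>UNIV. x^i) * (\<Sum>y\<in>UNIV. y^j))"
    by (simp add: sum_product)
  finally show ?thesis .
qed

lemma good_const: "good 0 (\<lambda>_. k)"
  unfolding good_def
proof (intro allI impI)
  fix i j assume "i + j + 0 < 2 * (CARD('a) - 1)"
  hence "i < CARD('a) - 1 \<or> j < CARD('a) - 1" by linarith
  thus "(\<Sum>p\<in>UNIV. fst p^i * snd p^j * k) = (0::'a)"
    unfolding mono_sum using psum by auto
qed

lemma good_mult:
  assumes "good d f"
  shows "good (Suc d) (\<lambda>p. (\<alpha> * fst p + \<beta> * snd p + \<gamma>) * f p)"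
  unfolding good_def
proof (intro allI impI)
  fix i j assume ij: "i + j + Suc d < 2 * (CARD('a) - 1)"
  have h: "\<forall>i j. i + j + d < 2*(CARD('a)-1) \<longrightarrow> (\<Sum>p\<in>UNIV. fst p^i * snd p^j * f p) = 0"
    using assms unfolding good_def .
  have z1: "(\<Sum>p\<in>UNIV. fst p^(Suc i) * snd p^j * f p) = 0" using h[rule_format, of "Suc i" j] ij by simp
  have z2: "(\<Sum>p\<in>UNIV. fst p^i * snd p^(Suc j) * f p) = 0" using h[rule_format, of i "Suc j"] ij by simp
  have z3: "(\<Sum>p\<in>UNIV. fst p^i * snd p^j * f p) = 0" using h[rule_format, of i j] ij by simp
  have pw: "fst p^i * snd p^j * ((\<alpha> * fst p + \<beta> * snd p + \<gamma>) * f p)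
     = \<alpha> * (fst p^(Suc i) * snd p^j * f p) + \<beta> * (fst p^i * snd p^(Suc j) * f p) + \<gamma> * (fst p^i * snd p^j * f p)" for p
    by (simp add: algebra_simps)
  have "(\<Sum>p\<in>UNIV. fst p^i * snd p^j * ((\<alpha> * fst p + \<beta> * snd p + \<gamma>) * f p))
     = (\<Sum>p\<in>UNIV. \<alpha> * (fst p^(Suc i) * snd p^j * f p) + \<beta> * (fst p^i * snd p^(Suc j) * f p) + \<gamma> * (fst p^i * snd p^j * f p))"
    by (rule sum.cong[OF refl]) (rule pw)
  also have "\<dots> = \<alpha> * (\<Sum>p\<in>UNIV. fst p^(Suc i) * snd p^j * f p) + \<beta> * (\<Sum>p\<in>UNIV. fst p^i * snd p^(Suc j) * f p)
       + \<gamma> * (\<Sum>p\<in>UNIV. fst p^i * snd p^j * f p)"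
    by (simp only: sum.distrib sum_distrib_left)
  also have "\<dots> = 0" by (simp only: z1 z2 z3) simp
  finally show "(\<Sum>p\<in>UNIV. fst p^i * snd p^j * ((\<alpha> * fst p + \<beta> * snd p + \<gamma>) * f p)) = 0" .
qed

lemma good_prod:
  fixes S :: "'b set" and \<alpha> \<beta> \<gamma> :: "'b \<Rightarrow> 'a::{field,finite}"
  assumes "finite S"
  shows "good (card S) (\<lambda>p. \<Prod>s\<in>S. \<alpha> s * fst p + \<beta> s * snd p + \<gamma> s)"
  using assms
proof (induction S rule: finite_induct)
  case empty thus ?case using good_const[of 1] by simp
next
  case (insert s S)
  have "good (Suc (card S)) (\<lambda>p. (\<alpha> s * fst p + \<beta> s * snd p + \<gamma> s) * (\<Prod>s\<in>S. \<alpha> s * fst p + \<beta> s * snd p + \<gamma> s))"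
    by (rule good_mult[OF insert.IH])
  thus ?case using insert by simp
qed

lemma jamison:
  fixes B :: "('a::{field,finite} \<times> 'a) set"
  assumes blk: "\<And>L. ag_line L \<Longrightarrow> B \<inter> L \<noteq> {}"
  shows "2 * CARD('a) - 1 \<le> card B"
proof -
  obtain x0 y0 where p0: "(x0,y0) \<in> B"
    using blk[OF ag_line_line_of[of None 0]] by auto
  define B' where "B' = B - {(x0,y0)}"
  define P where "P p = (\<Prod>s\<in>B'. (fst s - x0) * fst p + (snd s - y0) * snd p + (-1))" for p :: "'a \<times> 'a"
  have gP: "good (card B') P" unfolding P_def by (rule good_prod) simp
  have zero: "P (a,b) = 0" if ab: "(a,b) \<noteq> (0,0)" for a b
  proof -
    have "ag_line {(x,y). a*x + b*y = 1 + a*x0 + b*y0}"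
      unfolding ag_line_def using ab by blast
    then obtain u v where uv: "(u,v) \<in> B" "a*u + b*v = 1 + a*x0 + b*y0"
      using blk by blast
    have "(u,v) \<noteq> (x0,y0)" using uv(2) by auto
    hence "(u,v) \<in> B'" using uv(1) by (simp add: B'_def)
    moreover have "(u - x0) * a + (v - y0) * b + (-1) = 0" using uv(2) by (simp add: algebra_simps)
    ultimately show ?thesis unfolding P_def by (intro prod_zero) (auto intro!: bexI[of _ "(u,v)"])
  qed
  have P0: "P (0,0) = (-1)^card B'" unfolding P_def by simp
  have "(\<Sum>p\<in>UNIV. P p) = (\<Sum>p\<in>{(0,0)}. P p)"
    by (rule sum.mono_neutral_right) (use zero in auto)
  hence sumP: "(\<Sum>p\<in>UNIV. P p) = (-1)^card B'" using P0 by simp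
  have "\<not> card B' < 2*(CARD('a) - 1)"
  proof
    assume "card B' < 2*(CARD('a) - 1)"
    moreover have hh: "\<forall>i j. i + j + card B' < 2*(CARD('a)-1) \<longrightarrow> (\<Sum>p\<in>UNIV. fst p^i * snd p^j * P p) = 0"
      using gP unfolding good_def .
    ultimately have "(\<Sum>p\<in>UNIV. fst p^0 * snd p^0 * P p) = 0" using hh[rule_format, of 0 0] by simp
    thus False using sumP by simp
  qed
  moreover have "card B' = card B - 1" using p0 unfolding B'_def
    by (simp add: card_Diff_singleton)
  moreover have "card B > 0" using p0 card_gt_0_iff[of B] by auto
  ultimately show ?thesis by linarith
qed




lemma exists_c: "\<exists>c::'a::{field,finite}. \<forall>r. r^2 + r + c \<noteq> 0"
proof -
  define f where "f r = r^2 + r" for r :: 'a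
  have "f 0 = f (-1)" by (simp add: f_def power2_eq_square)
  moreover have "(0::'a) \<noteq> -1" by simp
  ultimately have "\<not> inj f" unfolding inj_def by blast
  hence "\<not> surj f" using finite_UNIV_surj_inj[of f] by auto
  then obtain c0 where "\<forall>r. f r \<noteq> c0" by (metis surj_def)
  have "\<forall>r. r^2 + r + (-c0) \<noteq> 0"
  proof
    fix r
    have "r^2 + r + (-c0) = f r - c0" by (simp add: f_def)
    thus "r^2 + r + (-c0) \<noteq> 0" using \<open>\<forall>r. f r \<noteq> c0\<close> by simp
  qed
  thus ?thesis by blast
qed

lemma quad3:
  fixes A B C x1 x2 x3 :: "'a::field"
  assumes "A \<noteq> 0" "A*x1^2 + B*x1 + C = 0" "A*x2^2 + B*x2 + C = 0" "A*x3^2 + B*x3 + C = 0"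
    "x1 \<noteq> x2" "x1 \<noteq> x3" "x2 \<noteq> x3"
  shows False
proof -
  have "(x1 - x2) * (A*(x1+x2) + B) = (A*x1^2 + B*x1 + C) - (A*x2^2 + B*x2 + C)"
    by (simp add: algebra_simps power2_eq_square)
  hence e1: "A*(x1+x2) + B = 0" using assms by simp
  have "(x1 - x3) * (A*(x1+x3) + B) = (A*x1^2 + B*x1 + C) - (A*x3^2 + B*x3 + C)"
    by (simp add: algebra_simps power2_eq_square)
  hence e2: "A*(x1+x3) + B = 0" using assms by simp
  have "A * (x2 - x3) = (A*(x1+x2) + B) - (A*(x1+x3) + B)" by (simp add: algebra_simps)
  hence "A * (x2 - x3) = 0" using e1 e2 by simp
  thus False using assms by simp
qed

lemma three_pts:
  assumes "finite S" "\<not> card S \<le> 2"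
  obtains x y z where "x \<in> S" "y \<in> S" "z \<in> S" "x \<noteq> y" "x \<noteq> z" "y \<noteq> z"
proof -
  obtain T where "T \<subseteq> S" "card T = 3" using obtain_subset_with_card_n[of 3 S] assms by auto
  thus ?thesis using that card_3_iff[of T] by auto
qed

lemma sq_inj2:
  fixes x y :: "'a::field"
  assumes "(2::'a) = 0" "x^2 = y^2"
  shows "x = y"
proof -
  have "(x - y)^2 = (x^2 - y^2) + 2*(y^2 - x*y)" by (simp add: algebra_simps power2_eq_square)
  hence "(x - y)^2 = 0" using assms by simp
  thus ?thesis by simp
qed

lemma char2:
  assumes "even CARD('a::{field,finite})"
  shows "(2::'a) = 0"
proof (rule ccontr)
  assume n2: "(2::'a) \<noteq> 0"
  have neg: "x \<noteq> -x" if "x \<noteq> 0" for x :: 'a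
  proof
    assume "x = -x" hence "2 * x = 0" by (metis mult_2 neg_eq_iff_add_eq_0)
    thus False using n2 that by simp
  qed
  define C where "C = {{x, -x} | x::'a. x \<noteq> 0}"
  have U: "\<Union>C = UNIV - {0}" unfolding C_def by auto
  have "2 * card C = card (\<Union>C)"
  proof (rule card_partition)
    show "finite C" by (rule finite)
    show "finite (\<Union>C)" by (rule finite)
    show "card c = 2" if cC: "c \<in> C" for c
    proof -
      from cC obtain x where "c = {x, -x}" "x \<noteq> 0" unfolding C_def by blast
      thus "card c = 2" using neg[of x] by simp
    qed
    show "c1 \<inter> c2 = {}" if cc: "c1 \<in> C" "c2 \<in> C" and ne: "c1 \<noteq> c2" for c1 c2
    proof -
      from cc obtain x y where c1: "c1 = {x, -x}" and c2: "c2 = {y, -y}" unfolding C_def by blast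
      show "c1 \<inter> c2 = {}"
      proof (rule ccontr)
        assume "c1 \<inter> c2 \<noteq> {}"
        then obtain z where "z \<in> c1" "z \<in> c2" by blast
        hence "y = x \<or> y = -x" unfolding c1 c2 by auto
        hence "c2 = c1" unfolding c1 c2 by (auto simp: insert_commute)
        thus False using ne by simp
      qed
    qed
  qed
  hence "2 * card C = CARD('a) - 1" unfolding U by (simp add: card_Diff_singleton)
  moreover have "CARD('a) \<ge> 2" by (rule q_ge2)
  ultimately show False using assms by presburger
qed




locale ell_ctx =
  fixes c :: "'a::{field,finite}"
  assumes hc: "\<forall>r. r^2 + r + c \<noteq> 0"
begin

definition Q :: "'a \<Rightarrow> 'a \<Rightarrow> 'a" where "Q x y = x^2 + x*y + c*y^2"

lemma c0: "c \<noteq> 0" using hc[rule_format, of 0] by simp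

lemma aniso: "Q x y = 0 \<Longrightarrow> y = 0"
proof (rule ccontr)
  assume Q0: "Q x y = 0" and y: "y \<noteq> 0"
  define z where "z = x / y"
  have xz: "x = z * y" unfolding z_def using y by simp
  have "Q x y = y^2 * (z^2 + z + c)" unfolding Q_def xz by (simp add: power2_eq_square algebra_simps)
  moreover have "z^2 + z + c \<noteq> 0" using hc by simp
  ultimately show False using Q0 y by simp
qed

lemma D0: "1 + m + c*m^2 \<noteq> 0"
proof
  assume h: "1 + m + c*m^2 = 0"
  hence "Q 1 m = 0" by (simp add: Q_def)
  hence "m = 0" by (rule aniso)
  thus False using h by simp
qed

definition tt :: "'a \<Rightarrow> 'a" where "tt m = -(2+m)/(1 + m + c*m^2)"
definition PP :: "'a \<Rightarrow> 'a \<times> 'a" where "PP m = (1 + tt m, tt m * m)"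
definition EE :: "('a \<times> 'a) set" where
  "EE = insert (1,0) (insert (1, -1/c) (PP ` {m. m \<noteq> -2}))"

lemma tt0: assumes "m \<noteq> -2" shows "tt m \<noteq> 0"
proof -
  have "2 + m \<noteq> 0" using assms neg_eq_iff_add_eq_0[of 2 m] by auto
  hence "-(2+m) \<noteq> 0" by (simp only: neg_equal_0_iff_equal not_False_eq_True)
  thus ?thesis unfolding tt_def using D0[of m] by simp
qed

lemma EE_Q: "p \<in> EE \<Longrightarrow> Q (fst p) (snd p) = 1"
proof -
  assume "p \<in> EE"
  moreover have "Q 1 0 = 1" by (simp add: Q_def)
  moreover have "Q 1 (-1/c) = 1" using c0 by (simp add: Q_def field_simps power2_eq_square)
  moreover have "Q (fst (PP m)) (snd (PP m)) = 1" for m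
  proof -
    let ?D = "1 + m + c*m^2"
    have tD: "tt m * ?D = -(2+m)" unfolding tt_def using D0[of m] by simp
    have "Q (fst (PP m)) (snd (PP m)) = 1 + tt m * (2 + m) + tt m * (tt m * ?D)"
      unfolding PP_def Q_def fst_conv snd_conv power2_eq_square by algebra
    also have "\<dots> = 1" unfolding tD by (simp add: algebra_simps)
    finally show ?thesis .
  qed
  ultimately show ?thesis unfolding EE_def by auto
qed

lemma card_EE: "card EE = CARD('a) + 1"
proof -
  have inj: "inj_on PP {m. m \<noteq> -2}"
  proof (rule inj_onI)
    fix m m' assume m: "m \<in> {m. m \<noteq> -2}" and m': "m' \<in> {m. m \<noteq> -2}" and e: "PP m = PP m'"
    hence t: "tt m = tt m'" unfolding PP_def by simp
    hence "tt m * m = tt m * m'" using e unfolding PP_def by simp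
    thus "m = m'" using tt0 m by simp
  qed
  have cS: "card {m::'a. m \<noteq> -2} = CARD('a) - 1"
  proof -
    have "{m::'a. m \<noteq> -2} = UNIV - {-2}" by auto
    thus ?thesis by (simp add: card_Diff_singleton)
  qed
  have n1: "(1,0) \<notin> PP ` {m. m \<noteq> -2}" "(1,-1/c) \<notin> PP ` {m. m \<noteq> -2}"
    using tt0 unfolding PP_def by auto
  have n2: "(1,0) \<noteq> (1::'a, -1/c)" using c0 by simp
  have "card EE = card (PP ` {m. m \<noteq> -2}) + 2"
    unfolding EE_def using n1 n2 by simp
  also have "\<dots> = CARD('a) + 1" using card_image[OF inj] cS q_ge2[where 'a='a] by simp
  finally show ?thesis .
qed

end



context ell_ctx begin

lemma conic_line: "card ({p. Q (fst p) (snd p) = 1} \<inter> line_of c' b) \<le> 2"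
proof (rule ccontr)
  assume "\<not> ?thesis"
  then obtain p1 p2 p3 where p: "p1 \<in> {p. Q (fst p) (snd p) = 1} \<inter> line_of c' b"
    "p2 \<in> {p. Q (fst p) (snd p) = 1} \<inter> line_of c' b" "p3 \<in> {p. Q (fst p) (snd p) = 1} \<inter> line_of c' b"
    "p1 \<noteq> p2" "p1 \<noteq> p3" "p2 \<noteq> p3"
    by (rule three_pts[OF finite])
  show False
  proof (cases c')
    case None
    have f: "fst pi = b" if "pi \<in> line_of c' b" for pi using that by (simp add: None line_of_def key_def)
    have eq: "c * (snd pi)^2 + b * snd pi + (b^2 - 1) = 0" if "pi \<in> {p. Q (fst p) (snd p) = 1} \<inter> line_of c' b" for pi
      using that f[of pi] by (auto simp: Q_def algebra_simps)
    have d: "snd pi \<noteq> snd pj" if "pi \<in> line_of c' b" "pj \<in> line_of c' b" "pi \<noteq> pj" for pi pj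
      using that f[OF that(1)] f[OF that(2)] by (metis prod.collapse)
    show False using quad3[OF c0 eq[OF p(1)] eq[OF p(2)] eq[OF p(3)]] d p by auto
  next
    case (Some m)
    have f: "snd pi = m * fst pi + b" if "pi \<in> line_of c' b" for pi
      using that by (simp add: Some line_of_def key_def algebra_simps)
    have eq: "(1 + m + c*m^2) * (fst pi)^2 + (b + 2*c*m*b) * fst pi + (c*b^2 - 1) = 0"
      if "pi \<in> {p. Q (fst p) (snd p) = 1} \<inter> line_of c' b" for pi
    proof -
      have "Q (fst pi) (snd pi) = 1" using that by simp
      hence "Q (fst pi) (m * fst pi + b) - 1 = 0" using f[of pi] that by simp
      moreover have "Q (fst pi) (m * fst pi + b) - 1 = (1 + m + c*m^2) * (fst pi)^2 + (b + 2*c*m*b) * fst pi + (c*b^2 - 1)"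
        unfolding Q_def by (simp add: algebra_simps power2_eq_square)
      ultimately show ?thesis by simp
    qed
    have d: "fst pi \<noteq> fst pj" if "pi \<in> line_of c' b" "pj \<in> line_of c' b" "pi \<noteq> pj" for pi pj
      using that f[OF that(1)] f[OF that(2)] by (metis prod.collapse)
    show False using quad3[OF D0 eq[OF p(1)] eq[OF p(2)] eq[OF p(3)]] d p by auto
  qed
qed

lemma EE_line: "card (EE \<inter> line_of c' b) \<le> 2"
proof -
  have "EE \<inter> line_of c' b \<subseteq> {p. Q (fst p) (snd p) = 1} \<inter> line_of c' b" using EE_Q by auto
  hence "card (EE \<inter> line_of c' b) \<le> card ({p. Q (fst p) (snd p) = 1} \<inter> line_of c' b)"
    by (intro card_mono) auto
  thus ?thesis using conic_line[of c' b] by simp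
qed

definition HH where "HH = insert (0,0) EE"

lemma card_HH: "card HH = CARD('a) + 2"
proof -
  have "(0,0) \<notin> EE" using EE_Q[of "(0,0)"] by (auto simp: Q_def)
  thus ?thesis unfolding HH_def using card_EE by simp
qed

lemma HH_line:
  assumes ch: "(2::'a) = 0"
  shows "card (HH \<inter> line_of c' b) \<le> 2"
proof (cases "(0,0) \<in> line_of c' b")
  case False
  hence "HH \<inter> line_of c' b = EE \<inter> line_of c' b" unfolding HH_def by auto
  thus ?thesis using EE_line by simp
next
  case True
  hence b0: "b = 0" by (cases c') (auto simp: line_of_def key_def)
  have one: "card (EE \<inter> line_of c' b) \<le> 1"
  proof -
    have "\<forall>p1\<in>EE \<inter> line_of c' b. \<forall>p2\<in>EE \<inter> line_of c' b. p1 = p2"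
    proof (intro ballI)
      fix p1 p2 assume p1: "p1 \<in> EE \<inter> line_of c' b" and p2: "p2 \<in> EE \<inter> line_of c' b"
      have Q1: "Q (fst p1) (snd p1) = 1" and Q2: "Q (fst p2) (snd p2) = 1" using EE_Q p1 p2 by auto
      show "p1 = p2"
      proof (cases c')
        case None
        hence f: "fst p1 = 0" "fst p2 = 0" using p1 p2 b0 by (auto simp: line_of_def key_def)
        hence "c * (snd p1)^2 = c * (snd p2)^2" using Q1 Q2 by (simp add: Q_def)
        hence "(snd p1)^2 = (snd p2)^2" using c0 by simp
        hence "snd p1 = snd p2" using sq_inj2[OF ch] by blast
        thus ?thesis using f by (metis prod.collapse)
      next
        case (Some m)
        hence f: "snd p1 = m * fst p1" "snd p2 = m * fst p2" using p1 p2 b0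
          by (auto simp: line_of_def key_def algebra_simps)
        have "Q x (m*x) = (1 + m + c*m^2) * x^2" for x unfolding Q_def by (simp add: algebra_simps power2_eq_square)
        hence "(1 + m + c*m^2) * (fst p1)^2 = (1 + m + c*m^2) * (fst p2)^2" using Q1 Q2 f by metis
        hence "(fst p1)^2 = (fst p2)^2" using D0[of m] by simp
        hence "fst p1 = fst p2" using sq_inj2[OF ch] by blast
        thus ?thesis using f by (metis prod.collapse)
      qed
    qed
    thus ?thesis using card_le_Suc0_iff_eq[of "EE \<inter> line_of c' b"] by simp
  qed
  have "HH \<inter> line_of c' b \<subseteq> insert (0,0) (EE \<inter> line_of c' b)" unfolding HH_def by auto
  hence "card (HH \<inter> line_of c' b) \<le> card (insert (0,0) (EE \<inter> line_of c' b))" by (intro card_mono) auto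
  also have "\<dots> \<le> Suc (card (EE \<inter> line_of c' b))" by (rule card_insert_le_m1) auto
  finally show ?thesis using one by simp
qed

end




lemma card_pts: "CARD('a::{field,finite} \<times> 'a) = CARD('a)^2"
  by (simp add: power2_eq_square)

lemma pig_le:
  fixes A :: "('a::{field,finite} \<times> 'a) set"
  assumes "card A < CARD('a) * (k+1)"
  shows "\<exists>b. card (A \<inter> line_of c b) \<le> k"
proof (rule ccontr)
  assume nt: "\<not> (\<exists>b. card (A \<inter> line_of c b) \<le> k)"
  have h: "k + 1 \<le> card (A \<inter> line_of c b)" for b
  proof -
    have "\<not> card (A \<inter> line_of c b) \<le> k" using nt by blast
    thus ?thesis by linarith
  qed
  have "(\<Sum>b\<in>(UNIV::'a set). k+1) \<le> (\<Sum>b\<in>UNIV. card (A \<inter> line_of c b))"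
    by (rule sum_mono) (rule h)
  hence "CARD('a) * (k+1) \<le> card A" using class_sum[of A c] by simp
  thus False using assms by simp
qed

lemma pig_ge:
  fixes A :: "('a::{field,finite} \<times> 'a) set"
  assumes "CARD('a) * k < card A"
  shows "\<exists>b. k + 1 \<le> card (A \<inter> line_of c b)"
proof (rule ccontr)
  assume nt: "\<not> (\<exists>b. k + 1 \<le> card (A \<inter> line_of c b))"
  have h: "card (A \<inter> line_of c b) \<le> k" for b
  proof -
    have "\<not> k + 1 \<le> card (A \<inter> line_of c b)" using nt by blast
    thus ?thesis by linarith
  qed
  have "(\<Sum>b\<in>UNIV. card (A \<inter> line_of c b)) \<le> (\<Sum>b\<in>(UNIV::'a set). k)"
    by (rule sum_mono) (rule h)
  hence "card A \<le> CARD('a) * k" using class_sum[of A c] by simp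
  thus False using assms by simp
qed

lemma compl_line:
  fixes F :: "('a::{field,finite} \<times> 'a) set"
  shows "card (F \<inter> line_of c b) + card ((UNIV - F) \<inter> line_of c b) = CARD('a)"
proof -
  have "card (F \<inter> line_of c b) + card ((UNIV - F) \<inter> line_of c b)
      = card ((F \<inter> line_of c b) \<union> ((UNIV - F) \<inter> line_of c b))"
    by (rule card_Un_disjoint[symmetric]) auto
  also have "(F \<inter> line_of c b) \<union> ((UNIV - F) \<inter> line_of c b) = line_of c b" by auto
  finally show ?thesis using card_line by simp
qed

lemma low_star:
  fixes F :: "('a::{field,finite} \<times> 'a) set"
  assumes "1 \<le> card F"
  shows "\<exists>T. transversal T \<and> card F + CARD('a) \<le> Fval F T"
proof -
  obtain p where p: "p \<in> F" using assms by (metis card.empty ex_in_conv not_one_le_zero)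
  show ?thesis
    by (rule exI[of _ "range (\<lambda>c. line_of c (key c p))"])
       (simp add: transversal_choice star[OF p])
qed

lemma line_le_q:
  fixes F :: "('a::{field,finite} \<times> 'a) set" and b :: 'a
  shows "card (F \<inter> line_of c b) \<le> CARD('a)"
proof -
  have "card (F \<inter> line_of c b) \<le> card (line_of c (b::'a))" by (intro card_mono) auto
  thus ?thesis using card_line[of c b] by simp
qed

lemma arc_q: "card F = u \<Longrightarrow> proj_arc u CARD('a::{field,finite}) (F :: ('a\<times>'a) set)"
  unfolding proj_arc_def using ag_line_cases line_le_q by metis

lemma exists_subset:
  assumes "u \<le> card (S :: ('a::{field,finite}\<times>'a) set)"
  shows "\<exists>F\<subseteq>S. card F = u"
  using obtain_subset_with_card_n[OF assms] by metis

lemma part1: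
  fixes t :: "'a::{field,finite} itself"
  assumes "n \<ge> 1" "1 \<le> u" "u \<le> n" "u \<le> CARD('a)"
  shows "ell t u n = u + CARD('a)"
proof -
  obtain S :: "'a set" where S: "card S = u" using obtain_subset_with_card_n[of u "UNIV::'a set"] assms by auto
  define F0 where "F0 = (\<lambda>y. (0::'a, y)) ` S"
  have cF0: "card F0 = u" unfolding F0_def using S by (simp add: card_image inj_on_def)
  have arc0: "proj_arc u n F0"
    unfolding proj_arc_def
  proof (intro conjI allI impI)
    show "card F0 = u" by (rule cF0)
    fix L :: "('a\<times>'a) set"
    have "card (F0 \<inter> L) \<le> card F0" by (intro card_mono) auto
    thus "card (F0 \<inter> L) \<le> n" using cF0 assms by simp
  qed
  show ?thesis
  proof (rule ell_eqI[OF _ arc0])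
    fix F :: "('a\<times>'a) set" assume "proj_arc u n F"
    hence "card F = u" unfolding proj_arc_def by simp
    thus "\<exists>T. transversal T \<and> u + CARD('a) \<le> Fval F T" using low_star[of F] assms by auto
  next
    fix T :: "('a\<times>'a) set set" assume T: "transversal T"
    have bnd: "card (F0 \<inter> line_of c b) \<le> 1 + (if c = None then u - 1 else 0)" for c b
    proof (cases c)
      case None
      have "card (F0 \<inter> line_of c b) \<le> card F0" by (intro card_mono) auto
      thus ?thesis using None cF0 assms by simp
    next
      case (Some m)
      have "F0 \<inter> line_of c b \<subseteq> {(0,b)}" unfolding F0_def by (auto simp: Some line_of_def key_def)
      hence "card (F0 \<inter> line_of c b) \<le> card {(0::'a,b)}" by (intro card_mono) auto
      thus ?thesis using Some by simp
    qed
    have "Fval F0 T \<le> (CARD('a) + 1) * 1 + (u - 1)" by (rule upper_gen[OF bnd T])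
    thus "Fval F0 T \<le> u + CARD('a)" using assms by simp
  qed
qed

lemma part2:
  fixes t :: "'a::{field,finite} itself"
  assumes "1 \<le> s" "s \<le> CARD('a)"
  shows "ell t (s * CARD('a)) CARD('a) = s * CARD('a) + CARD('a)"
proof -
  obtain S :: "'a set" where S: "card S = s" using obtain_subset_with_card_n[of s "UNIV::'a set"] assms by auto
  define F0 where "F0 = S \<times> (UNIV :: 'a set)"
  have cF0: "card F0 = s * CARD('a)" unfolding F0_def using S by (simp add: card_cartesian_product)
  show ?thesis
  proof (rule ell_eqI[OF _ arc_q[OF cF0]])
    fix F :: "('a\<times>'a) set" assume "proj_arc (s * CARD('a)) CARD('a) F"
    hence "card F = s * CARD('a)" unfolding proj_arc_def by simp
    moreover have "1 \<le> s * CARD('a)" using assms q_ge2[where 'a='a] by simp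
    ultimately show "\<exists>T. transversal T \<and> s * CARD('a) + CARD('a) \<le> Fval F T" using low_star[of F] by auto
  next
    fix T :: "('a\<times>'a) set set" assume T: "transversal T"
    have bnd: "card (F0 \<inter> line_of c b) \<le> s + (if c = None then CARD('a) - s else 0)" for c b
    proof (cases c)
      case None
      thus ?thesis using line_le_q[of F0 c b] assms by simp
    next
      case (Some m)
      have "F0 \<inter> line_of c b \<subseteq> (\<lambda>x. (x, m*x+b)) ` S" unfolding F0_def
        by (auto simp: Some line_of_def key_def algebra_simps)
      hence "card (F0 \<inter> line_of c b) \<le> card ((\<lambda>x. (x, m*x+b)) ` S)" by (intro card_mono) auto
      also have "\<dots> \<le> s" using card_image_le[of S "(\<lambda>x. (x, m*x+b))"] S by simp
      finally show ?thesis using Some by simp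
    qed
    have "Fval F0 T \<le> (CARD('a) + 1) * s + (CARD('a) - s)" by (rule upper_gen[OF bnd T])
    moreover obtain k where "CARD('a) = s + k" using assms le_Suc_ex by blast
    ultimately show "Fval F0 T \<le> s * CARD('a) + CARD('a)" by (simp add: algebra_simps)
  qed
qed

lemma part3:
  fixes t :: "'a::{field,finite} itself"
  assumes "n \<ge> 2"
  shows "ell t (CARD('a) + 1) n = 2 * (CARD('a) + 1)"
proof -
  obtain c :: 'a where hc: "\<forall>r. r^2 + r + c \<noteq> 0" using exists_c by blast
  interpret ell_ctx c by standard (rule hc)
  have arc0: "proj_arc (CARD('a) + 1) n EE"
    unfolding proj_arc_def using card_EE EE_line ag_line_cases assms by (metis order_trans)
  show ?thesis
  proof (rule ell_eqI[OF _ arc0])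
    fix F :: "('a\<times>'a) set" assume "proj_arc (CARD('a) + 1) n F"
    hence cF: "card F = CARD('a) + 1" unfolding proj_arc_def by simp
    have "\<forall>c. \<exists>b. 2 \<le> card (F \<inter> line_of c b)"
    proof
      fix c show "\<exists>b. 2 \<le> card (F \<inter> line_of c b)" using pig_ge[of 1 F c] cF by (simp add: numeral_2_eq_2)
    qed
    from lower_gen[OF this] show "\<exists>T. transversal T \<and> 2 * (CARD('a) + 1) \<le> Fval F T"
      using card_opt[where 'a='a] by (simp add: mult.commute)
  next
    fix T :: "('a\<times>'a) set set" assume T: "transversal T"
    have bnd: "card (EE \<inter> line_of c' b) \<le> 2 + (if c' = None then 0 else 0)" for c' b
      using EE_line by simp
    show "Fval EE T \<le> 2 * (CARD('a) + 1)" using upper_gen[OF bnd T] by simp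
  qed
qed

lemma part4:
  fixes t :: "'a::{field,finite} itself"
  assumes "n \<ge> 2" "even CARD('a)"
  shows "ell t (CARD('a) + 2) n = 2 * (CARD('a) + 1)"
proof -
  obtain c :: 'a where hc: "\<forall>r. r^2 + r + c \<noteq> 0" using exists_c by blast
  interpret ell_ctx c by standard (rule hc)
  have ch: "(2::'a) = 0" using char2 assms by blast
  have arc0: "proj_arc (CARD('a) + 2) n HH"
    unfolding proj_arc_def using card_HH HH_line[OF ch] ag_line_cases assms by (metis order_trans)
  show ?thesis
  proof (rule ell_eqI[OF _ arc0])
    fix F :: "('a\<times>'a) set" assume "proj_arc (CARD('a) + 2) n F"
    hence cF: "card F = CARD('a) + 2" unfolding proj_arc_def by simp
    have "\<forall>c. \<exists>b. 2 \<le> card (F \<inter> line_of c b)"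
    proof
      fix c show "\<exists>b. 2 \<le> card (F \<inter> line_of c b)" using pig_ge[of 1 F c] cF by (simp add: numeral_2_eq_2)
    qed
    from lower_gen[OF this] show "\<exists>T. transversal T \<and> 2 * (CARD('a) + 1) \<le> Fval F T"
      using card_opt[where 'a='a] by (simp add: mult.commute)
  next
    fix T :: "('a\<times>'a) set set" assume T: "transversal T"
    have bnd: "card (HH \<inter> line_of c' b) \<le> 2 + (if c' = None then 0 else 0)" for c' b
      using HH_line[OF ch] by simp
    show "Fval HH T \<le> 2 * (CARD('a) + 1)" using upper_gen[OF bnd T] by simp
  qed
qed




lemma card_compl:
  fixes F :: "('a::{field,finite} \<times> 'a) set"
  shows "card (UNIV - F) = CARD('a)^2 - card F"
  using card_Diff_subset[of F UNIV] card_pts[where 'a='a] by simp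

lemma sqfacts:
  fixes q :: nat assumes "q \<ge> 2"
  shows "q^2 = q*q" "2*q \<le> q*q" "(q+1)*(q-1) = q*q - 1"
proof -
  show "q^2 = q*q" by (simp add: power2_eq_square)
  show "2*q \<le> q*q" using assms by (intro mult_right_mono) auto
  show "(q+1)*(q-1) = q*q - 1" using assms by (cases q) (auto simp: algebra_simps)
qed

lemma pt_not_in:
  fixes F0 :: "('a::{field,finite} \<times> 'a) set"
  assumes "p \<in> line_of c b" "p \<notin> F0"
  shows "card (F0 \<inter> line_of c b) \<le> CARD('a) - 1"
proof -
  have "F0 \<inter> line_of c b \<subseteq> line_of c b - {p}" using assms by auto
  hence "card (F0 \<inter> line_of c b) \<le> card (line_of c b - {p})" by (intro card_mono) auto
  thus ?thesis using assms card_line[of c b] by (simp add: card_Diff_singleton)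
qed

lemma part5:
  fixes t :: "'a::{field,finite} itself"
  shows "ell1 t (CARD('a)^2 - 2*CARD('a) + 1) = CARD('a)^2 - 1"
proof -
  let ?q = "CARD('a)"
  have q2: "?q \<ge> 2" by (rule q_ge2)
  note sf = sqfacts[OF q2]
  define F0 where "F0 = (UNIV - {0::'a}) \<times> (UNIV - {0::'a})"
  have "card F0 = (?q - 1) * (?q - 1)" unfolding F0_def by (simp add: card_cartesian_product card_Diff_singleton)
  also have "\<dots> = ?q^2 - 2*?q + 1" using q2 by (cases ?q) (auto simp: power2_eq_square algebra_simps)
  finally have cF0: "card F0 = ?q^2 - 2*?q + 1" .
  show ?thesis unfolding ell1_def
  proof (rule ell_eqI[OF _ arc_q[OF cF0]])
    fix F :: "('a\<times>'a) set" assume "proj_arc (?q^2 - 2*?q + 1) ?q F"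
    hence cF: "card F = ?q^2 - 2*?q + 1" unfolding proj_arc_def by simp
    have cC: "card (UNIV - F) < ?q * (1+1)" unfolding card_compl cF using sf by simp
    have "\<forall>c. \<exists>b. ?q - 1 \<le> card (F \<inter> line_of c b)"
    proof
      fix c
      obtain b where "card ((UNIV - F) \<inter> line_of c b) \<le> 1" using pig_le[OF cC] by blast
      thus "\<exists>b. ?q - 1 \<le> card (F \<inter> line_of c b)" using compl_line[of F c b] by (intro exI[of _ b]) linarith
    qed
    from lower_gen[OF this] show "\<exists>T. transversal T \<and> ?q^2 - 1 \<le> Fval F T"
      using card_opt[where 'a='a] sf by (simp add: mult.commute)
  next
    fix T :: "('a\<times>'a) set set" assume T: "transversal T"
    have bnd: "card (F0 \<inter> line_of c b) \<le> (?q - 1) + (if c = None then 0 else 0)" for c b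
    proof (cases c)
      case None
      have "(b, 0) \<in> line_of c b" "(b,0) \<notin> F0" by (auto simp: None line_of_def key_def F0_def)
      thus ?thesis using pt_not_in by simp
    next
      case (Some m)
      have "(0, b) \<in> line_of c b" "(0,b) \<notin> F0" by (auto simp: Some line_of_def key_def F0_def)
      thus ?thesis using pt_not_in by simp
    qed
    show "Fval F0 T \<le> ?q^2 - 1" using upper_gen[OF bnd T] sf by (simp add: mult.commute)
  qed
qed

lemma part6:
  fixes t :: "'a::{field,finite} itself"
  assumes u1: "CARD('a)^2 - 2*CARD('a) + 2 \<le> u" and u2: "u \<le> CARD('a)^2 - CARD('a)"
  shows "ell1 t u = CARD('a)^2"
proof -
  let ?q = "CARD('a)"
  have q2: "?q \<ge> 2" by (rule q_ge2)
  note sf = sqfacts[OF q2]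
  define V where "V = (UNIV - {0::'a}) \<times> (UNIV :: 'a set)"
  have cV: "card V = ?q^2 - ?q" unfolding V_def
    by (simp add: card_cartesian_product card_Diff_singleton power2_eq_square algebra_simps diff_mult_distrib)
  obtain F0 where F0: "F0 \<subseteq> V" "card F0 = u" using exists_subset[of u V] u2 cV by auto
  show ?thesis unfolding ell1_def
  proof (rule ell_eqI[OF _ arc_q[OF F0(2)]])
    fix F :: "('a\<times>'a) set" assume "proj_arc u ?q F"
    hence cF: "card F = u" unfolding proj_arc_def by simp
    define C where "C = UNIV - F"
    have cC: "card C = ?q^2 - u" unfolding C_def card_compl cF ..
    have cC2: "card C < ?q * (1+1)" using cC u1 u2 sf by simp
    have cl: "card (F \<inter> line_of c b) + card (C \<inter> line_of c b) = ?q" for c b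
      unfolding C_def by (rule compl_line)
    show "\<exists>T. transversal T \<and> ?q^2 \<le> Fval F T"
    proof (cases "\<exists>c0 b0. C \<inter> line_of c0 b0 = {}")
      case True
      then obtain c0 b0 where e: "C \<inter> line_of c0 b0 = {}" by blast
      define v where "v c = (?q - 1) + (if c = c0 then 1 else 0)" for c :: "'a option"
      have "\<forall>c. \<exists>b. v c \<le> card (F \<inter> line_of c b)"
      proof
        fix c
        show "\<exists>b. v c \<le> card (F \<inter> line_of c b)"
        proof (cases "c = c0")
          case True
          thus ?thesis using cl[of c0 b0] e q2 unfolding v_def by (intro exI[of _ b0]) simp
        next
          case False
          obtain b where "card (C \<inter> line_of c b) \<le> 1" using pig_le[OF cC2] by blast
          thus ?thesis using cl[of c b] False unfolding v_def by (intro exI[of _ b]) simp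
        qed
      qed
      from lower_gen[OF this] obtain T where T: "transversal T" "(\<Sum>c\<in>UNIV. v c) \<le> Fval F T" by blast
      have "(\<Sum>c\<in>UNIV. v c) = (\<Sum>c\<in>(UNIV::'a option set). ?q - 1) + (\<Sum>c\<in>(UNIV::'a option set). if c = c0 then 1 else 0)"
        unfolding v_def by (rule sum.distrib)
      also have "\<dots> = (?q + 1) * (?q - 1) + 1" using card_opt[where 'a='a] by simp
      also have "\<dots> = ?q^2" using sf q2 by simp
      finally show ?thesis using T by auto
    next
      case False
      have "\<And>L. ag_line L \<Longrightarrow> C \<inter> L \<noteq> {}" using False ag_line_cases by blast
      hence "2 * ?q - 1 \<le> card C" by (rule jamison)
      thus ?thesis using cC u1 sf by simp
    qed
  next
    fix T :: "('a\<times>'a) set set" assume T: "transversal T"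
    have bnd: "card (F0 \<inter> line_of c b) \<le> (?q - 1) + (if c = None then 1 else 0)" for c b
    proof (cases c)
      case None
      thus ?thesis using line_le_q[of F0 c b] q2 by simp
    next
      case (Some m)
      have "(0, b) \<in> line_of c b" "(0,b) \<notin> F0" using F0(1) by (auto simp: Some line_of_def key_def V_def)
      thus ?thesis using pt_not_in Some by simp
    qed
    show "Fval F0 T \<le> ?q^2" using upper_gen[OF bnd T] sf q2 by simp
  qed
qed

lemma part7:
  fixes t :: "'a::{field,finite} itself"
  assumes u1: "CARD('a)^2 - CARD('a) + 1 \<le> u" and u2: "u \<le> CARD('a)^2"
  shows "ell1 t u = CARD('a)^2 + CARD('a)"
proof -
  let ?q = "CARD('a)"
  have q2: "?q \<ge> 2" by (rule q_ge2)
  note sf = sqfacts[OF q2]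
  obtain F0 :: "('a\<times>'a) set" where F0: "card F0 = u"
    using exists_subset[of u "UNIV :: ('a\<times>'a) set"] u2 card_pts[where 'a='a] by auto
  show ?thesis unfolding ell1_def
  proof (rule ell_eqI[OF _ arc_q[OF F0]])
    fix F :: "('a\<times>'a) set" assume "proj_arc u ?q F"
    hence cF: "card F = u" unfolding proj_arc_def by simp
    have cC: "card (UNIV - F) < ?q * (0+1)" unfolding card_compl cF using u1 u2 sf by simp
    have "\<forall>c. \<exists>b. ?q \<le> card (F \<inter> line_of c b)"
    proof
      fix c
      obtain b where "card ((UNIV - F) \<inter> line_of c b) \<le> 0" using pig_le[OF cC] by blast
      thus "\<exists>b. ?q \<le> card (F \<inter> line_of c b)" using compl_line[of F c b] by (intro exI[of _ b]) linarith
    qed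
    from lower_gen[OF this] show "\<exists>T. transversal T \<and> ?q^2 + ?q \<le> Fval F T"
      using card_opt[where 'a='a] sf by (simp add: algebra_simps)
  next
    fix T :: "('a\<times>'a) set set" assume T: "transversal T"
    have bnd: "card (F0 \<inter> line_of c b) \<le> ?q + (if c = None then 0 else 0)" for c b
      using line_le_q by simp
    show "Fval F0 T \<le> ?q^2 + ?q" using upper_gen[OF bnd T] sf by (simp add: algebra_simps)
  qed
qed



theorem theorem4p4:
  fixes t :: "'a::{field,finite} itself"
  defines "q \<equiv> card (UNIV :: 'a set)"
  shows
   "(\<forall>u n. n \<ge> 1 \<and> 1 \<le> u \<and> u \<le> min n q \<and> (\<exists>F::('a\<times>'a) set. proj_arc u n F)
        \<longrightarrow> ell t u n = u + q)
    \<and> (\<forall>s. 1 \<le> s \<and> s \<le> q \<longrightarrow> ell1 t (s * q) = s * q + q)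
    \<and> (\<forall>n. n \<ge> 2 \<and> (\<exists>F::('a\<times>'a) set. proj_arc (q + 1) n F)
        \<longrightarrow> ell t (q + 1) n = 2 * (q + 1))
    \<and> (even q \<longrightarrow> (\<forall>n. n \<ge> 2 \<and> (\<exists>F::('a\<times>'a) set. proj_arc (q + 2) n F)
        \<longrightarrow> ell t (q + 2) n = 2 * (q + 1)))
    \<and> ell1 t (q^2 - 2*q + 1) = q^2 - 1
    \<and> (\<forall>u. q^2 - 2*q + 2 \<le> u \<and> u \<le> q^2 - q \<longrightarrow> ell1 t u = q^2)
    \<and> (\<forall>u. q^2 - q + 1 \<le> u \<and> u \<le> q^2 \<longrightarrow> ell1 t u = q^2 + q)"
  unfolding q_def
proof (intro conjI allI impI)
  fix u n assume h: "n \<ge> 1 \<and> 1 \<le> u \<and> u \<le> min n CARD('a) \<and> (\<exists>F::('a\<times>'a) set. proj_arc u n F)"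
  show "ell t u n = u + CARD('a)" using part1[of n u t] h by simp
next
  fix s assume h: "1 \<le> s \<and> s \<le> CARD('a)"
  show "ell1 t (s * CARD('a)) = s * CARD('a) + CARD('a)" unfolding ell1_def using part2[of s t] h by simp
next
  fix n assume h: "n \<ge> 2 \<and> (\<exists>F::('a\<times>'a) set. proj_arc (CARD('a) + 1) n F)"
  show "ell t (CARD('a) + 1) n = 2 * (CARD('a) + 1)" using part3[of n t] h by simp
next
  fix n assume e: "even CARD('a)" and h: "n \<ge> 2 \<and> (\<exists>F::('a\<times>'a) set. proj_arc (CARD('a) + 2) n F)"
  show "ell t (CARD('a) + 2) n = 2 * (CARD('a) + 1)" using part4[of n t] h e by simp
next
  show "ell1 t (CARD('a)^2 - 2*CARD('a) + 1) = CARD('a)^2 - 1" by (rule part5)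
next
  fix u assume h: "CARD('a)^2 - 2*CARD('a) + 2 \<le> u \<and> u \<le> CARD('a)^2 - CARD('a)"
  show "ell1 t u = CARD('a)^2" using part6[of u t] h by simp
next
  fix u assume h: "CARD('a)^2 - CARD('a) + 1 \<le> u \<and> u \<le> CARD('a)^2"
  show "ell1 t u = CARD('a)^2 + CARD('a)" using part7[of u t] h by simp
qed

end
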